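(* Let $L$ be a bounded lattice, $k\in\mathbb{N}^*$, and $\otimes$ a t-norm on $L$ that is both $\wedge$-distributive and $\vee$-distributive and such that $\langle L,\otimes\rangle$ is divisible. A function $F:L^2\to L$ is $\otimes^k$-homogeneous, has $1_L$ as neutral element, and satisfies $F(x,y)=F(x\wedge y,x\vee y)$ for all $x,y\in L$ if and only if $$F(x,y)=(x\wedge y)\otimes(x\vee y)_\otimes^{(k-1)}\quad\text{for all }x,y\in L.$$
   Context: A t-norm on $L$ is a commutative, associative map $L^2\to L$, non-decreasing in each argument, with neutral element $1_L$. It is $\wedge$-distributive if $x\otimes(y\wedge z)=(x\otimes y)\wedge(x\otimes z)$ and $\vee$-distributive if $x\otimes(y\vee z)=(x\otimes y)\vee(x\otimes z)$, for all $x,y,z$. $\langle L,\otimes\rangle$ is divisible if for all $x,y$ with $y\le_Lx$ there is $z$ with $y=x\otimes z$. Powers: $\lambda_\otimes^{(0)}=1_L$, $\lambda_\otimes^{(1)}=\lambda$, $\lambda_\otimes^{(m)}=\lambda\otimes\lambda_\otimes^{(m-1)}$ for $m\ge2$. $F:L^2\to L$ is $\otimes^k$-homogeneous if $F(\lambda\otimes x,\lambda\otimes y)=\lambda_\otimes^{(k)}\otimes F(x,y)$ for all $\lambda,x,y\in L$. $1_L$ is a neutral element of $F$ if $F(x,1_L)=F(1_L,x)=x$ for all $x$. *)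

theory Defs
  imports Main
begin

definition is_tnorm :: "('a::bounded_lattice \<Rightarrow> 'a \<Rightarrow> 'a) \<Rightarrow> bool" where
  "is_tnorm T \<longleftrightarrow>
     (\<forall>x y. T x y = T y x) \<and>
     (\<forall>x y z. T x (T y z) = T (T x y) z) \<and>
     (\<forall>x y z. y \<le> z \<longrightarrow> T x y \<le> T x z) \<and>
     (\<forall>x y z. x \<le> y \<longrightarrow> T x z \<le> T y z) \<and>
     (\<forall>x. T x top = x)"

definition inf_distributive :: "('a::bounded_lattice \<Rightarrow> 'a \<Rightarrow> 'a) \<Rightarrow> bool" where
  "inf_distributive T \<longleftrightarrow> (\<forall>x y z. T x (inf y z) = inf (T x y) (T x z))"

definition sup_distributive :: "('a::bounded_lattice \<Rightarrow> 'a \<Rightarrow> 'a) \<Rightarrow> bool" where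
  "sup_distributive T \<longleftrightarrow> (\<forall>x y z. T x (sup y z) = sup (T x y) (T x z))"

definition divisible :: "('a::bounded_lattice \<Rightarrow> 'a \<Rightarrow> 'a) \<Rightarrow> bool" where
  "divisible T \<longleftrightarrow> (\<forall>x y. y \<le> x \<longrightarrow> (\<exists>z. y = T x z))"

text \<open>Powers: tpow T l 0 = top, tpow T l (Suc m) = T l (tpow T l m); this agrees with the
  paper's convention (power 1 = l since l (x) top = l).\<close>
fun tpow :: "('a::bounded_lattice \<Rightarrow> 'a \<Rightarrow> 'a) \<Rightarrow> 'a \<Rightarrow> nat \<Rightarrow> 'a" where
  "tpow T l 0 = top"
| "tpow T l (Suc m) = T l (tpow T l m)"

definition homogeneous :: "('a::bounded_lattice \<Rightarrow> 'a \<Rightarrow> 'a) \<Rightarrow> nat \<Rightarrow> ('a \<Rightarrow> 'a \<Rightarrow> 'a) \<Rightarrow> bool" where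
  "homogeneous T k F \<longleftrightarrow> (\<forall>l x y. F (T l x) (T l y) = T (tpow T l k) (F x y))"

definition neutral_top :: "('a::bounded_lattice \<Rightarrow> 'a \<Rightarrow> 'a) \<Rightarrow> bool" where
  "neutral_top F \<longleftrightarrow> (\<forall>x. F x top = x \<and> F top x = x)"

end

theory Submission
  imports Defs
begin

lemma tn_comm: "is_tnorm T \<Longrightarrow> T x y = T y x" unfolding is_tnorm_def by blast
lemma tn_assoc: "is_tnorm T \<Longrightarrow> T x (T y z) = T (T x y) z" unfolding is_tnorm_def by blast
lemma tn_neut: "is_tnorm T \<Longrightarrow> T x top = x" unfolding is_tnorm_def by blast

lemma tpow_top:
  assumes "is_tnorm T" shows "tpow T top m = top"
  by (induction m) (simp_all add: tn_neut[OF assms])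

lemma tpow_mult:
  assumes "is_tnorm T" shows "tpow T (T l b) m = T (tpow T l m) (tpow T b m)"
proof (induction m)
  case 0 then show ?case using tn_neut[OF assms] by simp
next
  case (Suc m)
  note c = tn_comm[OF assms] and a = tn_assoc[OF assms]
  have lc: "\<And>x y z. T x (T y z) = T y (T x z)" 
  proof -
    fix x y z
    have "T x (T y z) = T (T x y) z" by (rule a)
    also have "\<dots> = T (T y x) z" by (simp only: c[of x y])
    also have "\<dots> = T y (T x z)" by (rule a[symmetric])
    finally show "T x (T y z) = T y (T x z)" .
  qed
  have "tpow T (T l b) (Suc m) = T (T l b) (T (tpow T l m) (tpow T b m))" using Suc by simp
  also have "\<dots> = T (T l (tpow T l m)) (T b (tpow T b m))"
    by (simp only: a[symmetric] c lc)
  finally show ?case by simp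
qed

theorem mainTheorem12:
  fixes T :: "'a::bounded_lattice \<Rightarrow> 'a \<Rightarrow> 'a" and F :: "'a \<Rightarrow> 'a \<Rightarrow> 'a" and k :: nat
  assumes "k \<ge> 1"
    and "is_tnorm T" and "inf_distributive T" and "sup_distributive T" and "divisible T"
  shows "(homogeneous T k F \<and> neutral_top F \<and> (\<forall>x y. F x y = F (inf x y) (sup x y)))
     \<longleftrightarrow> (\<forall>x y. F x y = T (inf x y) (tpow T (sup x y) (k - 1)))"
proof -
  note c = tn_comm[OF assms(2)] and a = tn_assoc[OF assms(2)] and n = tn_neut[OF assms(2)]
  have lc: "\<And>x y z. T x (T y z) = T y (T x z)" 
  proof -
    fix x y z
    have "T x (T y z) = T (T x y) z" by (rule a)
    also have "\<dots> = T (T y x) z" by (simp only: c[of x y])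
    also have "\<dots> = T y (T x z)" by (rule a[symmetric])
    finally show "T x (T y z) = T y (T x z)" .
  qed
  obtain j where kj: "k = Suc j" using assms(1) by (cases k) auto
  show ?thesis
  proof
    assume H: "homogeneous T k F \<and> neutral_top F \<and> (\<forall>x y. F x y = F (inf x y) (sup x y))"
    show "\<forall>x y. F x y = T (inf x y) (tpow T (sup x y) (k - 1))"
    proof (intro allI)
      fix x y :: 'a
      have "inf x y \<le> sup x y" by (meson inf_le1 le_supI1)
      then obtain z where z: "inf x y = T (sup x y) z" using assms(5) by (auto simp: divisible_def)
      have "F x y = F (inf x y) (sup x y)" using H by blast
      also have "\<dots> = F (T (sup x y) z) (T (sup x y) top)" using z n by simp
      also have "\<dots> = T (tpow T (sup x y) k) (F z top)" using conjunct1[OF H] unfolding homogeneous_def by blast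
      also have "\<dots> = T (tpow T (sup x y) k) z" using conjunct1[OF conjunct2[OF H]] unfolding neutral_top_def by simp
      also have "\<dots> = T (inf x y) (tpow T (sup x y) (k - 1))"
        using z kj by (simp only: tpow.simps a[symmetric] c lc diff_Suc_1)
      finally show "F x y = T (inf x y) (tpow T (sup x y) (k - 1))" .
    qed
  next
    assume H: "\<forall>x y. F x y = T (inf x y) (tpow T (sup x y) (k - 1))"
    have hom: "homogeneous T k F"
      unfolding homogeneous_def
    proof (intro allI)
      fix l x y
      have "F (T l x) (T l y) = T (T l (inf x y)) (tpow T (T l (sup x y)) j)"
        using H kj assms(3,4) by (simp add: inf_distributive_def sup_distributive_def)
      also have "\<dots> = T (T l (inf x y)) (T (tpow T l j) (tpow T (sup x y) j))"
        using tpow_mult[OF assms(2)] by simp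
      also have "\<dots> = T (tpow T l k) (F x y)" using H kj by (simp only: tpow.simps a[symmetric] c lc diff_Suc_1)
      finally show "F (T l x) (T l y) = T (tpow T l k) (F x y)" .
    qed
    have neu: "neutral_top F" unfolding neutral_top_def
      using H n c tpow_top[OF assms(2)] by simp
    have "\<forall>x y. F x y = F (inf x y) (sup x y)"
      using H by (simp add: inf_absorb1 sup_absorb2 le_supI1)
    then show "homogeneous T k F \<and> neutral_top F \<and> (\<forall>x y. F x y = F (inf x y) (sup x y))"
      using hom neu by simp
  qed
qed

end
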